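(* Let $\gamma:[0,T]\to\mathbb{R}^2$ be a trajectory with continuous second derivatives whose curvature is bounded by $\kappa_{max}>0$. Let $r_1,r_2$ satisfy $\sqrt{2}\, r_1 \leq r_2 < \frac{1}{\kappa_{max}}$. Then for all $x\in\mathbb{R}^2$, $$C_{B_{r_1}}(x) \leq C_{S_{r_1},S_{r_2}}(x) \leq C_{B_{r_2}}(x).$$
   Context: For $r>0$ and $x=(x_1,x_2)\in\mathbb{R}^2$ let $B_r(x)=\{y\in\mathbb{R}^2 : (y_1-x_1)^2+(y_2-x_2)^2\le r^2\}$ (closed disk) and $S_r(x)=\{y\in\mathbb{R}^2:\max(|y_1-x_1|,|y_2-x_2|)\le r\}$ (closed square). For a set $K\subset\mathbb{R}^2$, let $A_K$ be the set of intervals $[a,b]\subset[0,T]$ such that $\gamma([a,b])=\{\gamma(t):t\in[a,b]\}\subset K$ and $[a,b]$ is maximal with this property (no larger interval $[a',b']\subset[0,T]$ containing $[a,b]$ has trace contained in $K$). The local trajectory count function is $C_{B_r}(x)=|A_{B_r(x)}|$ (cardinality). For $r_1<r_2$, define an equivalence relation on $A_{S_{r_1}(x)}$ by $[a_1,b_1]\sim[a_2,b_2]$ if there is an interval $[a,b]\in A_{S_{r_2}(x)}$ with $[a_1,b_1]\cup[a_2,b_2]\subset[a,b]$; the robust local square count function is $C_{S_{r_1},S_{r_2}}(x)=|A_{S_{r_1}(x)}/\!\sim|$, the number of equivalence classes. *)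

theory Defs
  imports "HOL-Analysis.Analysis" "HOL-Library.Extended_Nat"
begin

(* Points of R^2 are pairs of reals; the product norm/dist is Euclidean. *)

definition disk :: "real \<Rightarrow> real \<times> real \<Rightarrow> (real \<times> real) set" where
  "disk r x = {y. (fst y - fst x)^2 + (snd y - snd x)^2 \<le> r^2}"

definition square :: "real \<Rightarrow> real \<times> real \<Rightarrow> (real \<times> real) set" where
  "square r x = {y. max \<bar>fst y - fst x\<bar> \<bar>snd y - snd x\<bar> \<le> r}"

definition trace_in :: "(real \<Rightarrow> real \<times> real) \<Rightarrow> real \<Rightarrow> (real \<times> real) set \<Rightarrow> real \<Rightarrow> real \<Rightarrow> bool" where
  "trace_in \<gamma> T K a b \<longleftrightarrow> 0 \<le> a \<and> a \<le> b \<and> b \<le> T \<and> \<gamma> ` {a..b} \<subseteq> K"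

definition maxint :: "(real \<Rightarrow> real \<times> real) \<Rightarrow> real \<Rightarrow> (real \<times> real) set \<Rightarrow> (real \<times> real) set" where
  "maxint \<gamma> T K = {(a, b). trace_in \<gamma> T K a b \<and>
      (\<forall>a' b'. trace_in \<gamma> T K a' b' \<and> {a..b} \<subseteq> {a'..b'} \<longrightarrow> a' = a \<and> b' = b)}"

definition ecard :: "'a set \<Rightarrow> enat" where
  "ecard A = (if finite A then enat (card A) else \<infinity>)"

definition count_ball :: "(real \<Rightarrow> real \<times> real) \<Rightarrow> real \<Rightarrow> real \<Rightarrow> real \<times> real \<Rightarrow> enat" where
  "count_ball \<gamma> T r x = ecard (maxint \<gamma> T (disk r x))"

definition robust_rel :: "(real \<Rightarrow> real \<times> real) \<Rightarrow> real \<Rightarrow> real \<Rightarrow> real \<Rightarrow> real \<times> real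
    \<Rightarrow> ((real \<times> real) \<times> (real \<times> real)) set" where
  "robust_rel \<gamma> T r1 r2 x = {((a1, b1), (a2, b2)).
      (a1, b1) \<in> maxint \<gamma> T (square r1 x) \<and> (a2, b2) \<in> maxint \<gamma> T (square r1 x) \<and>
      (\<exists>(a, b) \<in> maxint \<gamma> T (square r2 x). {a1..b1} \<union> {a2..b2} \<subseteq> {a..b})}"

definition count_robust_square :: "(real \<Rightarrow> real \<times> real) \<Rightarrow> real \<Rightarrow> real \<Rightarrow> real \<Rightarrow> real \<times> real \<Rightarrow> enat" where
  "count_robust_square \<gamma> T r1 r2 x =
     ecard (maxint \<gamma> T (square r1 x) // robust_rel \<gamma> T r1 r2 x)"

definition curvature :: "(real \<times> real) \<Rightarrow> (real \<times> real) \<Rightarrow> real" where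
  "curvature v w = \<bar>fst v * snd w - snd v * fst w\<bar> / norm v ^ 3"

end

theory Submission
  imports Defs
begin

lemma mono_within:
  fixes f f' :: "real \<Rightarrow> real"
  assumes "a \<le> b" "\<And>t. t \<in> {a..b} \<Longrightarrow> (f has_real_derivative f' t) (at t within {a..b})"
    "\<And>t. t \<in> {a..b} \<Longrightarrow> f' t \<ge> 0"
  shows "f a \<le> f b"
proof (rule DERIV_nonneg_imp_increasing_open[OF assms(1)])
  show "continuous_on {a..b} f" using assms(2) by (rule DERIV_continuous_on)
  fix x assume "a < x" "x < b"
  then show "\<exists>y. DERIV f x :> y \<and> 0 \<le> y"
    using assms(2)[of x] assms(3)[of x] by (auto simp: at_within_Icc_at)
qed

lemma aux_inv: "(inverse s / 2) * (2 * (A::real)) = A / s"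
proof -
  have "(inverse s / 2) * (2 * A) = inverse s * A" by simp
  also have "\<dots> = A / s" by (simp add: divide_inverse_commute)
  finally show ?thesis .
qed

lemma dn_within:
  fixes X1 X2 Y1 Y2 :: "real \<Rightarrow> real"
  assumes "(X1 has_real_derivative X2 t) (at t within S)"
    "(Y1 has_real_derivative Y2 t) (at t within S)"
    "X1 t ^ 2 + Y1 t ^ 2 > 0"
  shows "((\<lambda>t. sqrt (X1 t ^ 2 + Y1 t ^ 2)) has_real_derivative
     (X1 t * X2 t + Y1 t * Y2 t) / sqrt (X1 t ^ 2 + Y1 t ^ 2)) (at t within S)"
proof -
  have i: "((\<lambda>t. X1 t ^ 2 + Y1 t ^ 2) has_real_derivative 2 * (X1 t * X2 t + Y1 t * Y2 t)) (at t within S)"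
    using DERIV_add[OF DERIV_power[OF assms(1), of 2] DERIV_power[OF assms(2), of 2]]
    by (simp add: algebra_simps)
  have "((\<lambda>t. sqrt (X1 t ^ 2 + Y1 t ^ 2)) has_real_derivative
     (inverse (sqrt (X1 t ^ 2 + Y1 t ^ 2)) / 2) * (2 * (X1 t * X2 t + Y1 t * Y2 t))) (at t within S)"
    by (rule DERIV_chain2[OF DERIV_real_sqrt[OF assms(3)] i])
  then show ?thesis by (rule DERIV_cong) (rule aux_inv)
qed

lemma aux_frac: "(n::real) > 0 \<Longrightarrow> (a*n - b*(c/n))/(n*n) = (a*n^2 - b*c)/n^3"
proof -
  assume n: "n > 0"
  have "a*n - b*(c/n) = (a*n^2 - b*c)/n" using n by (simp add: diff_divide_distrib power2_eq_square)
  then show ?thesis using n by (simp add: power3_eq_cube)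
qed

lemma hd_within:
  fixes X X1 X2 Y Y1 Y2 :: "real \<Rightarrow> real" and R \<sigma> :: real
  assumes "(Y has_real_derivative Y1 t) (at t within S)"
    "(X1 has_real_derivative X2 t) (at t within S)"
    "(Y1 has_real_derivative Y2 t) (at t within S)"
    "X1 t ^ 2 + Y1 t ^ 2 > 0"
  shows "((\<lambda>t. Y t + \<sigma> * R * X1 t / sqrt (X1 t ^ 2 + Y1 t ^ 2)) has_real_derivative
     Y1 t * (1 + \<sigma> * R * (X2 t * Y1 t - X1 t * Y2 t) / (sqrt (X1 t ^ 2 + Y1 t ^ 2)) ^ 3)) (at t within S)"
proof -
  define n where "n = sqrt (X1 t ^ 2 + Y1 t ^ 2)"
  have n0: "n > 0" using assms(4) by (simp add: n_def)
  have nn: "n^2 = X1 t ^ 2 + Y1 t ^ 2" using assms(4) n_def by simp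
  have dn: "((\<lambda>t. sqrt (X1 t ^ 2 + Y1 t ^ 2)) has_real_derivative
     (X1 t * X2 t + Y1 t * Y2 t) / n) (at t within S)"
    unfolding n_def by (rule dn_within[of X1 X2 t S Y1 Y2, OF assms(2,3,4)])
  have dq: "((\<lambda>t. \<sigma> * R * X1 t / sqrt (X1 t ^ 2 + Y1 t ^ 2)) has_real_derivative
     ((\<sigma> * R * X2 t) * n - (\<sigma> * R * X1 t) * ((X1 t * X2 t + Y1 t * Y2 t) / n)) / (n*n)) (at t within S)"
    unfolding n_def by (rule DERIV_divide[OF DERIV_cmult[OF assms(2), of "\<sigma> * R"] dn[unfolded n_def]]) (use assms(4) in auto)
  have d: "((\<lambda>t. Y t + \<sigma> * R * X1 t / sqrt (X1 t ^ 2 + Y1 t ^ 2)) has_real_derivative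
     Y1 t + ((\<sigma> * R * X2 t) * n - (\<sigma> * R * X1 t) * ((X1 t * X2 t + Y1 t * Y2 t) / n)) / (n*n)) (at t within S)"
    by (rule DERIV_add[OF assms(1) dq])
  have "Y1 t + ((\<sigma> * R * X2 t) * n - (\<sigma> * R * X1 t) * ((X1 t * X2 t + Y1 t * Y2 t) / n)) / (n*n)
     = Y1 t * (1 + \<sigma> * R * (X2 t * Y1 t - X1 t * Y2 t) / n ^ 3)"
  proof -
    have k: "X2 t * n^2 - X1 t * (X1 t * X2 t + Y1 t * Y2 t) = Y1 t * (X2 t * Y1 t - X1 t * Y2 t)"
      unfolding nn by (simp add: algebra_simps power2_eq_square)
    have "((\<sigma> * R * X2 t) * n - (\<sigma> * R * X1 t) * ((X1 t * X2 t + Y1 t * Y2 t) / n)) / (n*n)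
       = ((\<sigma> * R * X2 t) * n^2 - (\<sigma> * R * X1 t) * (X1 t * X2 t + Y1 t * Y2 t)) / n^3"
      by (rule aux_frac[OF n0])
    also have "\<dots> = \<sigma> * R * (X2 t * n^2 - X1 t * (X1 t * X2 t + Y1 t * Y2 t)) / n^3"
      by (simp only: right_diff_distrib mult.assoc)
    also have "\<dots> = Y1 t * (\<sigma> * R * (X2 t * Y1 t - X1 t * Y2 t) / n ^ 3)" unfolding k by (simp only: times_divide_eq_right mult_ac)
    finally show ?thesis by (simp only: distrib_left mult_1_right)
  qed
  from DERIV_cong[OF d this] show ?thesis unfolding n_def .
qed
lemma dD_within:
  fixes X Y :: "real \<Rightarrow> real"
  assumes "(X has_real_derivative X1) (at t within S)" "(Y has_real_derivative Y1) (at t within S)"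
    "R^2 - (Y t - Q)^2 > 0"
  shows "((\<lambda>t. X t - P - sqrt (R^2 - (Y t - Q)^2)) has_real_derivative
     X1 + (Y t - Q) * Y1 / sqrt (R^2 - (Y t - Q)^2)) (at t within S)"
proof -
  have g: "((\<lambda>t. R^2 - (Y t - Q)^2) has_real_derivative 0 - of_nat 2 * ((Y1 - 0) * (Y t - Q)^(2 - Suc 0))) (at t within S)"
    by (intro DERIV_diff DERIV_const DERIV_power assms(2))
  have "((\<lambda>t. sqrt (R^2 - (Y t - Q)^2)) has_real_derivative
     (inverse (sqrt (R^2 - (Y t - Q)^2)) / 2) * (0 - of_nat 2 * ((Y1 - 0) * (Y t - Q)^(2 - Suc 0)))) (at t within S)"
    by (rule DERIV_chain2[OF DERIV_real_sqrt[OF assms(3)] g])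
  from DERIV_diff[OF DERIV_diff[OF assms(1) DERIV_const[of P]] this]
  show ?thesis
  proof (rule DERIV_cong)
    have "(inverse (sqrt (R^2 - (Y t - Q)^2)) / 2) * (0 - of_nat 2 * ((Y1 - 0) * (Y t - Q)^(2 - Suc 0)))
       = - ((Y t - Q) * Y1 / sqrt (R^2 - (Y t - Q)^2))"
    proof -
      have "0 - of_nat 2 * ((Y1 - 0) * (Y t - Q)^(2 - Suc 0)) = - (2 * ((Y t - Q) * Y1))" by simp
      then show ?thesis by (simp only: mult_minus_right aux_inv)
    qed
    then show "X1 - 0 - inverse (sqrt (R^2 - (Y t - Q)^2)) / 2 * (0 - of_nat 2 * ((Y1 - 0) * (Y t - Q)^(2 - Suc 0)))
      = X1 + (Y t - Q) * Y1 / sqrt (R^2 - (Y t - Q)^2)" by simp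
  qed
qed

lemma aux_abs: "\<bar>\<sigma>\<bar> = 1 \<Longrightarrow> R > 0 \<Longrightarrow> N > 0 \<Longrightarrow> \<bar>\<sigma> * R * A / N\<bar> = R * (\<bar>A\<bar> / (N::real))"
  by (simp add: abs_mult abs_divide)

lemma core:
  fixes X Y X1 Y1 X2 Y2 :: "real \<Rightarrow> real" and t0 t1 \<kappa> r :: real
  assumes t01: "t0 \<le> t1"
  and dX: "\<And>t. t \<in> {t0..t1} \<Longrightarrow> (X has_real_derivative X1 t) (at t within {t0..t1})"
  and dY: "\<And>t. t \<in> {t0..t1} \<Longrightarrow> (Y has_real_derivative Y1 t) (at t within {t0..t1})"
  and dX1: "\<And>t. t \<in> {t0..t1} \<Longrightarrow> (X1 has_real_derivative X2 t) (at t within {t0..t1})"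
  and dY1: "\<And>t. t \<in> {t0..t1} \<Longrightarrow> (Y1 has_real_derivative Y2 t) (at t within {t0..t1})"
  and nz: "\<And>t. t \<in> {t0..t1} \<Longrightarrow> X1 t ^ 2 + Y1 t ^ 2 > 0"
  and curv: "\<And>t. t \<in> {t0..t1} \<Longrightarrow> \<bar>X1 t * Y2 t - Y1 t * X2 t\<bar> \<le> \<kappa> * (sqrt (X1 t ^ 2 + Y1 t ^ 2)) ^ 3"
  and kpos: "0 < \<kappa>" and rk: "r * \<kappa> < 1"
  and box: "\<And>t. t \<in> {t0..t1} \<Longrightarrow> \<bar>X t\<bar> \<le> r \<and> \<bar>Y t\<bar> \<le> r"
  and p1: "X t0 \<ge> 0" and p2: "Y t0 \<ge> 0" and perp: "X t0 * X1 t0 + Y t0 * Y1 t0 = 0"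
  and up: "Y1 t0 > 0"
  and far: "(1/\<kappa>)^2 \<le> X t0 ^ 2 + Y t0 ^ 2"
  shows "(1/\<kappa>)^2 \<le> X t1 ^ 2 + Y t1 ^ 2"
proof -
  define R where "R = 1/\<kappa>"
  have R0: "R > 0" using kpos by (simp add: R_def)
  have rR: "r < R" using rk kpos by (simp add: R_def field_simps)
  define n where "n t = sqrt (X1 t ^ 2 + Y1 t ^ 2)" for t
  define H where "H \<sigma> t = Y t + \<sigma> * R * X1 t / n t" for \<sigma> t
  define d where "d = sqrt (X t0 ^ 2 + Y t0 ^ 2)"
  have t0in: "t0 \<in> {t0..t1}" using t01 by simp
  have dR: "R \<le> d" unfolding d_def using far R0
    by (metis R_def real_le_rsqrt less_eq_real_def)
  have Yr: "Y t0 \<le> r" using box[OF t0in] by (simp add: abs_le_iff)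
  have d2: "d^2 = X t0 ^ 2 + Y t0 ^ 2" unfolding d_def by simp
  have X0pos: "X t0 > 0"
  proof -
    have "Y t0 ^ 2 < R ^ 2" using Yr rR p2 by (simp add: power_strict_mono)
    moreover have "R^2 \<le> d^2" using dR R0 by (simp add: power_mono)
    ultimately have "X t0 ^ 2 > 0" using d2 by linarith
    then show ?thesis using p1 by (cases "X t0 = 0") auto
  qed
  have dpos: "d > 0" using dR R0 by linarith
  have ratio: "X1 t0 / n t0 = - Y t0 / d"
  proof -
    have x1: "X1 t0 = - Y t0 * Y1 t0 / X t0" using perp X0pos by (simp add: field_simps)
    have "n t0 = Y1 t0 * d / X t0"
    proof -
      have "(Y1 t0 * d / X t0)^2 = X1 t0 ^ 2 + Y1 t0 ^ 2"
        unfolding x1 using X0pos d2 by (simp add: field_simps power2_eq_square) (metis distrib_right mult.assoc)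
      moreover have "Y1 t0 * d / X t0 \<ge> 0" using up dpos X0pos by simp
      ultimately show ?thesis unfolding n_def by (metis real_sqrt_unique)
    qed
    then show ?thesis unfolding x1 using X0pos up dpos by (simp add: field_simps)
  qed
  have Hmono: "H \<sigma> t0 \<le> H \<sigma> s"
    if sig: "\<bar>\<sigma>\<bar> = 1" and s: "t0 \<le> s" "s \<le> t1" and pos: "\<forall>t\<in>{t0..s}. Y1 t \<ge> 0" for \<sigma> s
  proof (rule mono_within[OF s(1)])
    fix t assume t: "t \<in> {t0..s}"
    then have tt: "t \<in> {t0..t1}" using s by auto
    have sub: "{t0..s} \<subseteq> {t0..t1}" using s by auto
    show "(H \<sigma> has_real_derivative
        Y1 t * (1 + \<sigma> * R * (X2 t * Y1 t - X1 t * Y2 t) / (sqrt (X1 t ^ 2 + Y1 t ^ 2)) ^ 3)) (at t within {t0..s})"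
      unfolding H_def[abs_def] n_def
      by (rule hd_within[of Y Y1 t "{t0..s}" X1 X2 Y2 \<sigma> R, OF DERIV_subset[OF dY[OF tt] sub] DERIV_subset[OF dX1[OF tt] sub]
            DERIV_subset[OF dY1[OF tt] sub] nz[OF tt]])
    have np: "sqrt (X1 t ^ 2 + Y1 t ^ 2) > 0" using nz[OF tt] by simp
    have npow: "(sqrt (X1 t ^ 2 + Y1 t ^ 2)) ^ 3 > 0" using np by simp
    have a2: "\<bar>X2 t * Y1 t - X1 t * Y2 t\<bar> = \<bar>X1 t * Y2 t - Y1 t * X2 t\<bar>"
      by (metis abs_minus_commute mult.commute)
    have "\<bar>\<sigma> * R * (X2 t * Y1 t - X1 t * Y2 t) / (sqrt (X1 t ^ 2 + Y1 t ^ 2)) ^ 3\<bar>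
        = R * (\<bar>X1 t * Y2 t - Y1 t * X2 t\<bar> / (sqrt (X1 t ^ 2 + Y1 t ^ 2)) ^ 3)"
      using aux_abs[OF sig R0 npow, of "X2 t * Y1 t - X1 t * Y2 t"] unfolding a2 .
    also have "\<dots> \<le> R * \<kappa>"
      using curv[OF tt] np R0 by (intro mult_left_mono) (simp_all add: divide_le_eq)
    also have "\<dots> = 1" using kpos by (simp add: R_def)
    finally have "0 \<le> 1 + \<sigma> * R * (X2 t * Y1 t - X1 t * Y2 t) / (sqrt (X1 t ^ 2 + Y1 t ^ 2)) ^ 3"
      by linarith
    then show "0 \<le> Y1 t * (1 + \<sigma> * R * (X2 t * Y1 t - X1 t * Y2 t) / (sqrt (X1 t ^ 2 + Y1 t ^ 2)) ^ 3)"
      using pos t by simp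
  qed
  have Hs: "H \<sigma> t0 = Y t0 + \<sigma> * R * (X1 t0 / n t0)" for \<sigma> unfolding H_def by simp
  have Hm0: "H (-1) t0 = Y t0 + R * Y t0 / d" unfolding Hs ratio by simp
  have Hp0: "H 1 t0 = Y t0 - R * Y t0 / d" unfolding Hs ratio by simp
  have Hm0pos: "H (-1) t0 \<ge> 0" unfolding Hm0 using p2 R0 dpos by simp
  have Hp0pos: "H 1 t0 \<ge> 0"
  proof -
    have "R * Y t0 / d \<le> Y t0" using dR dpos p2 by (simp add: divide_le_eq) (metis mult.commute mult_right_mono)
    then show ?thesis unfolding Hp0 by simp
  qed
  have Y1cont: "continuous_on {t0..t1} Y1" using dY1 by (rule DERIV_continuous_on)
  have Y1pos: "\<forall>t\<in>{t0..t1}. Y1 t > 0"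
  proof (rule ccontr)
    assume neg: "\<not> (\<forall>t\<in>{t0..t1}. Y1 t > 0)"
    define Z where "Z = {t0..t1} \<inter> Y1 -` {..0}"
    have Zne: "Z \<noteq> {}" using neg by (auto simp: Z_def)
    have Zcl: "closed Z" unfolding Z_def by (rule continuous_closed_preimage[OF Y1cont]) auto
    have Zbdd: "bdd_below Z" unfolding Z_def by (rule bdd_belowI[of _ t0]) auto
    define ts where "ts = Inf Z"
    have tsZ: "ts \<in> Z" unfolding ts_def by (rule closed_contains_Inf[OF Zne Zbdd Zcl])
    have tsin: "ts \<in> {t0..t1}" and Y1ts: "Y1 ts \<le> 0" using tsZ by (auto simp: Z_def)
    have tsne: "ts \<noteq> t0" using Y1ts up by auto
    have t0ts: "t0 < ts" using tsin tsne by auto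
    have before: "Y1 t > 0" if "t0 \<le> t" "t < ts" for t
    proof (rule ccontr)
      assume "\<not> Y1 t > 0"
      then have "t \<in> Z" using that tsin by (auto simp: Z_def)
      then have "ts \<le> t" unfolding ts_def by (rule cInf_lower[OF _ Zbdd])
      with that show False by simp
    qed
    have "Y1 ts \<ge> 0"
    proof -
      define W where "W = {t0..ts} \<inter> Y1 -` {0..}"
      have "closed W" unfolding W_def
        by (rule continuous_closed_preimage[OF continuous_on_subset[OF Y1cont]]) (use tsin in auto)
      moreover have "{t0..<ts} \<subseteq> W" using before by (auto simp: W_def less_imp_le)
      ultimately have "closure {t0..<ts} \<subseteq> W" by (simp add: closure_minimal)
      then have "ts \<in> W" using t0ts by auto
      then show ?thesis by (simp add: W_def)
    qed
    with Y1ts have Y10: "Y1 ts = 0" by simp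
    have posY: "\<forall>t\<in>{t0..ts}. Y1 t \<ge> 0" using before Y10 by (auto simp: le_less)
    have nts: "n ts = \<bar>X1 ts\<bar>" unfolding n_def using Y10 by simp
    have X1ne: "X1 ts \<noteq> 0" using nz[OF tsin] Y10 by auto
    have Yts: "Y ts \<le> r" using box[OF tsin] by (simp add: abs_le_iff)
    show False
    proof (cases "X1 ts > 0")
      case True
      have "H (-1) ts = Y ts - R" unfolding H_def nts using True by simp
      moreover have "H (-1) t0 \<le> H (-1) ts" by (rule Hmono) (use tsin posY in auto)
      ultimately show False using Hm0pos Yts rR by linarith
    next
      case False
      then have "X1 ts < 0" using X1ne by simp
      then have "H 1 ts = Y ts - R" unfolding H_def nts by simp
      moreover have "H 1 t0 \<le> H 1 ts" by (rule Hmono) (use tsin posY in auto)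
      ultimately show False using Hp0pos Yts rR by linarith
    qed
  qed
  define Q1 where "Q1 = X t0 - R * X t0 / d"
  define Q2 where "Q2 = Y t0 - R * Y t0 / d"
  have Q1pos: "Q1 \<ge> 0"
  proof -
    have "R * X t0 / d \<le> X t0" using dR dpos p1 by (simp add: divide_le_eq) (metis mult.commute mult_right_mono)
    then show ?thesis unfolding Q1_def by simp
  qed
  have Q2pos: "Q2 \<ge> 0" using Hp0pos Hp0 Q2_def by simp
  have Ymono: "Y t0 \<le> Y t" if t: "t \<in> {t0..t1}" for t
  proof (rule mono_within[of t0 t Y Y1])
    show "t0 \<le> t" using t by simp
    fix s assume s: "s \<in> {t0..t}"
    then have ss: "s \<in> {t0..t1}" using t by auto
    show "(Y has_real_derivative Y1 s) (at s within {t0..t})"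
      by (rule DERIV_subset[OF dY[OF ss]]) (use t in auto)
    show "0 \<le> Y1 s" using Y1pos ss by (auto intro: less_imp_le)
  qed
  have Hge: "Q2 \<le> H 1 t" if t: "t \<in> {t0..t1}" for t
    using Hmono[of 1 t] t Y1pos Hp0 Q2_def by (auto simp: less_imp_le)
  have wge: "R * Y t0 / d \<le> Y t - Q2" if t: "t \<in> {t0..t1}" for t
    using Ymono[OF t] Q2_def by simp
  have wnn: "0 \<le> Y t - Q2" if t: "t \<in> {t0..t1}" for t
    using wge[OF t] R0 dpos p2 by (meson divide_nonneg_pos mult_nonneg_nonneg less_imp_le order_trans)
  have wlt: "Y t - Q2 < R" if t: "t \<in> {t0..t1}" for t
    using box[OF t] Q2pos rR by (simp add: abs_le_iff)
  have gpos: "R^2 - (Y t - Q2)^2 > 0" if t: "t \<in> {t0..t1}" for t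
  proof -
    have "(Y t - Q2)^2 < R^2" using wnn[OF t] wlt[OF t] by (simp add: power_strict_mono)
    then show ?thesis by simp
  qed
  define D where "D t = X t - Q1 - sqrt (R^2 - (Y t - Q2)^2)" for t
  have Dmono: "D t0 \<le> D t1"
  proof (rule mono_within[OF t01])
    fix t assume t: "t \<in> {t0..t1}"
    show "(D has_real_derivative X1 t + (Y t - Q2) * Y1 t / sqrt (R^2 - (Y t - Q2)^2)) (at t within {t0..t1})"
      unfolding D_def[abs_def] by (rule dD_within[OF dX[OF t] dY[OF t] gpos[OF t]])
    define w where "w = Y t - Q2"
    define s where "s = sqrt (R^2 - w^2)"
    have w0: "0 \<le> w" using wnn[OF t] by (simp add: w_def)
    have s0: "s > 0" using gpos[OF t] by (simp add: s_def w_def)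
    have s2: "s^2 = R^2 - w^2" using gpos[OF t] by (simp add: s_def w_def)
    have np: "n t > 0" using nz[OF t] by (simp add: n_def)
    have n2: "(n t)^2 = X1 t ^ 2 + Y1 t ^ 2" using nz[OF t] by (simp add: n_def)
    have y1: "Y1 t > 0" using Y1pos t by auto
    have hx: "- w * n t / R \<le> X1 t"
    proof -
      have "Q2 \<le> Y t + 1 * R * X1 t / n t" using Hge[OF t] by (simp add: H_def)
      then have "- w \<le> R * X1 t / n t" by (simp add: w_def)
      then have "- w * n t \<le> R * X1 t" using np by (simp add: le_divide_eq)
      then have "- w * n t \<le> X1 t * R" by (simp add: mult.commute)
      then show ?thesis by (subst pos_divide_le_eq[OF R0])
    qed
    have "0 \<le> X1 t + w * Y1 t / s"
    proof (cases "X1 t \<ge> 0")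
      case True
      have "0 \<le> w * Y1 t / s" using w0 y1 s0 by (intro divide_nonneg_pos mult_nonneg_nonneg) auto
      then show ?thesis using True by linarith
    next
      case False
      have m: "- w * n t / R = - (w * n t / R)" by (simp only: mult_minus_left minus_divide_left)
      have a: "- X1 t \<le> w * n t / R" using hx unfolding m by linarith
      have "(- X1 t)^2 \<le> (w * n t / R)^2" using a False by - (rule power_mono, auto)
      moreover have "(- X1 t)^2 = X1 t ^ 2" by (rule power2_minus)
      moreover have "(w * n t / R)^2 = w^2 * (n t)^2 / R^2" by (simp only: power_divide power_mult_distrib)
      ultimately have "X1 t ^ 2 \<le> w^2 * (n t)^2 / R^2" by simp
      then have e1: "X1 t^2 * R^2 \<le> w^2 * (n t)^2" using R0 by (simp add: pos_le_divide_eq)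
      have e2: "(n t)^2 * s^2 = (n t)^2 * R^2 - (n t)^2 * w^2" by (simp only: s2 right_diff_distrib)
      have e3: "(n t)^2 * R^2 = X1 t^2 * R^2 + Y1 t^2 * R^2" by (simp only: n2 distrib_right)
      have e4: "w^2 * (n t)^2 = (n t)^2 * w^2" by (rule mult.commute)
      have e5: "(n t)^2 * s^2 \<le> Y1 t^2 * R^2" using e1 e2 e3 e4 by linarith
      have e6: "(n t * s / R)^2 = (n t)^2 * s^2 / R^2" by (simp only: power_divide power_mult_distrib)
      have R2: "R^2 > 0" using R0 by simp
      have "(n t)^2 * s^2 / R^2 \<le> Y1 t ^ 2" using e5 by (subst pos_divide_le_eq[OF R2])
      then have "(n t * s / R)^2 \<le> Y1 t ^ 2" unfolding e6 .
      then have e7: "n t * s / R \<le> Y1 t" using y1 by - (rule power2_le_imp_le, auto)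
      have e8: "n t * s / R = n t / R * s" by (rule times_divide_eq_left[symmetric])
      have "n t / R * s \<le> Y1 t" using e7 unfolding e8 .
      then have "n t / R \<le> Y1 t / s" by (subst pos_le_divide_eq[OF s0])
      then have "w * (n t / R) \<le> w * (Y1 t / s)" using w0 by (rule mult_left_mono)
      then have "w * n t / R \<le> w * Y1 t / s" by (simp only: times_divide_eq_right)
      then show ?thesis using a by linarith
    qed
    then show "0 \<le> X1 t + (Y t - Q2) * Y1 t / sqrt (R^2 - (Y t - Q2)^2)"
      by (simp add: w_def s_def)
  qed
  have D0: "D t0 = 0"
  proof -
    have a: "Y t0 - Q2 = R * Y t0 / d" by (simp add: Q2_def)
    have b: "(R * Y t0 / d)^2 + (R * X t0 / d)^2 = R^2"
    proof -
      have "(R * Y t0 / d)^2 + (R * X t0 / d)^2 = R^2 * (X t0^2 + Y t0^2) / d^2"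
        by (simp add: power_divide power_mult_distrib add_divide_distrib distrib_left add.commute)
      also have "\<dots> = R^2" using d2 dpos X0pos by simp
      finally show ?thesis .
    qed
    have "R^2 - (Y t0 - Q2)^2 = (R * X t0 / d)^2" unfolding a using b by linarith
    then have "sqrt (R^2 - (Y t0 - Q2)^2) = R * X t0 / d" using R0 X0pos dpos by simp
    then show ?thesis by (simp add: D_def Q1_def)
  qed
  have t1in: "t1 \<in> {t0..t1}" using t01 by simp
  define w1 where "w1 = Y t1 - Q2"
  define s1 where "s1 = sqrt (R^2 - w1^2)"
  have "0 \<le> D t1" using Dmono D0 by simp
  then have xge: "Q1 + s1 \<le> X t1" by (simp add: D_def s1_def w1_def)
  have s1nn: "0 \<le> s1" using gpos[OF t1in] by (simp add: s1_def w1_def)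
  have w1nn: "0 \<le> w1" using wnn[OF t1in] by (simp add: w1_def)
  have "s1^2 \<le> X t1 ^ 2" using xge s1nn Q1pos by - (rule power_mono, simp_all)
  moreover have "w1^2 \<le> Y t1 ^ 2" using w1nn Q2pos by - (rule power_mono, simp_all add: w1_def)
  moreover have "s1^2 + w1^2 = R^2" using gpos[OF t1in] by (simp add: s1_def w1_def)
  ultimately show ?thesis unfolding R_def[symmetric] by linarith
qed

lemma second_test:
  fixes f f1 :: "real \<Rightarrow> real" and f2 a b t :: real
  assumes at: "a < t" "t < b"
    and d1: "\<And>s. a < s \<Longrightarrow> s < b \<Longrightarrow> (f has_real_derivative f1 s) (at s)"
    and d2: "(f1 has_real_derivative f2) (at t)"
    and z: "f1 t = 0"
    and mx: "\<And>s. a < s \<Longrightarrow> s < b \<Longrightarrow> f s \<le> f t"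
  shows "f2 \<le> 0"
proof (rule ccontr)
  assume "\<not> f2 \<le> 0"
  then have "f2 > 0" by simp
  from DERIV_pos_inc_right[OF d2 this] obtain \<delta> where \<delta>: "\<delta> > 0"
    and inc: "\<And>h. h > 0 \<Longrightarrow> h < \<delta> \<Longrightarrow> f1 t < f1 (t + h)" by blast
  define m where "m = min \<delta> (b - t)"
  define h where "h = m / 2"
  have m1: "m \<le> \<delta>" "m \<le> b - t" "m > 0" using \<delta> at by (auto simp: m_def)
  have h0: "h > 0" using m1 unfolding h_def by linarith
  have hd: "h < \<delta>" using m1 \<delta> unfolding h_def by linarith
  have hb: "t + h < b" using m1 unfolding h_def by linarith
  obtain z where z1: "t < z" and z2: "z < t + h" and eq: "f (t + h) - f t = ((t + h) - t) * f1 z"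
    using MVT2[of t "t + h" f f1] h0 d1 at hb by force
  have "f1 t < f1 (t + (z - t))" by (rule inc) (use z1 z2 hd in auto)
  then have "f1 z > 0" using z by simp
  then have "f (t + h) - f t > 0" using eq h0 by simp
  moreover have "f (t + h) \<le> f t" by (rule mx) (use at h0 hb in auto)
  ultimately show False by simp
qed

lemma core_signed:
  fixes A B A1 B1 A2 B2 :: "real \<Rightarrow> real" and t0 t1 \<kappa> r \<sigma>1 \<sigma>2 :: real
  assumes t01: "t0 \<le> t1"
  and dA: "\<And>t. t \<in> {t0..t1} \<Longrightarrow> (A has_real_derivative A1 t) (at t within {t0..t1})"
  and dB: "\<And>t. t \<in> {t0..t1} \<Longrightarrow> (B has_real_derivative B1 t) (at t within {t0..t1})"
  and dA1: "\<And>t. t \<in> {t0..t1} \<Longrightarrow> (A1 has_real_derivative A2 t) (at t within {t0..t1})"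
  and dB1: "\<And>t. t \<in> {t0..t1} \<Longrightarrow> (B1 has_real_derivative B2 t) (at t within {t0..t1})"
  and nz: "\<And>t. t \<in> {t0..t1} \<Longrightarrow> A1 t ^ 2 + B1 t ^ 2 > 0"
  and curv: "\<And>t. t \<in> {t0..t1} \<Longrightarrow> \<bar>A1 t * B2 t - B1 t * A2 t\<bar> \<le> \<kappa> * (sqrt (A1 t ^ 2 + B1 t ^ 2)) ^ 3"
  and kpos: "0 < \<kappa>" and rk: "r * \<kappa> < 1"
  and box: "\<And>t. t \<in> {t0..t1} \<Longrightarrow> \<bar>A t\<bar> \<le> r \<and> \<bar>B t\<bar> \<le> r"
  and s1: "\<bar>\<sigma>1\<bar> = 1" and s2: "\<bar>\<sigma>2\<bar> = 1"
  and p1: "\<sigma>1 * A t0 \<ge> 0" and p2: "\<sigma>2 * B t0 \<ge> 0" and perp: "A t0 * A1 t0 + B t0 * B1 t0 = 0"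
  and up: "\<sigma>2 * B1 t0 > 0"
  and far: "(1/\<kappa>)^2 \<le> A t0 ^ 2 + B t0 ^ 2"
  shows "(1/\<kappa>)^2 \<le> A t1 ^ 2 + B t1 ^ 2"
proof -
  have sq1: "\<sigma>1^2 = 1" and sq2: "\<sigma>2^2 = 1" using s1 s2 by (metis power2_abs power_one)+
  have e: "(\<sigma> * u)^2 = u^2" if "\<sigma>^2 = 1" for \<sigma> u :: real
    using that by (simp add: power_mult_distrib)
  have res: "(1/\<kappa>)^2 \<le> (\<sigma>1 * A t1) ^ 2 + (\<sigma>2 * B t1) ^ 2"
  proof (rule core[of t0 t1 "\<lambda>t. \<sigma>1 * A t" "\<lambda>t. \<sigma>1 * A1 t" "\<lambda>t. \<sigma>2 * B t" "\<lambda>t. \<sigma>2 * B1 t"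
        "\<lambda>t. \<sigma>1 * A2 t" "\<lambda>t. \<sigma>2 * B2 t" \<kappa> r])
    show "t0 \<le> t1" by fact
    show "0 < \<kappa>" by fact
    show "r * \<kappa> < 1" by fact
    fix t assume t: "t \<in> {t0..t1}"
    show "((\<lambda>t. \<sigma>1 * A t) has_real_derivative \<sigma>1 * A1 t) (at t within {t0..t1})"
      by (rule DERIV_cmult[OF dA[OF t]])
    show "((\<lambda>t. \<sigma>2 * B t) has_real_derivative \<sigma>2 * B1 t) (at t within {t0..t1})"
      by (rule DERIV_cmult[OF dB[OF t]])
    show "((\<lambda>t. \<sigma>1 * A1 t) has_real_derivative \<sigma>1 * A2 t) (at t within {t0..t1})"
      by (rule DERIV_cmult[OF dA1[OF t]])
    show "((\<lambda>t. \<sigma>2 * B1 t) has_real_derivative \<sigma>2 * B2 t) (at t within {t0..t1})"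
      by (rule DERIV_cmult[OF dB1[OF t]])
    show "(\<sigma>1 * A1 t)^2 + (\<sigma>2 * B1 t)^2 > 0" unfolding e[OF sq1] e[OF sq2] by (rule nz[OF t])
    have "\<bar>\<sigma>1 * A1 t * (\<sigma>2 * B2 t) - \<sigma>2 * B1 t * (\<sigma>1 * A2 t)\<bar> = \<bar>\<sigma>1 * \<sigma>2\<bar> * \<bar>A1 t * B2 t - B1 t * A2 t\<bar>"
      by (simp add: abs_mult[symmetric] algebra_simps)
    also have "\<dots> = \<bar>A1 t * B2 t - B1 t * A2 t\<bar>" using s1 s2 by (simp add: abs_mult)
    finally show "\<bar>\<sigma>1 * A1 t * (\<sigma>2 * B2 t) - \<sigma>2 * B1 t * (\<sigma>1 * A2 t)\<bar>
        \<le> \<kappa> * sqrt ((\<sigma>1 * A1 t)^2 + (\<sigma>2 * B1 t)^2) ^ 3"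
      unfolding e[OF sq1] e[OF sq2] using curv[OF t] by simp
    show "\<bar>\<sigma>1 * A t\<bar> \<le> r \<and> \<bar>\<sigma>2 * B t\<bar> \<le> r" using box[OF t] s1 s2 by (simp add: abs_mult)
  next
    show "0 \<le> \<sigma>1 * A t0" by fact
    show "0 \<le> \<sigma>2 * B t0" by fact
    show "\<sigma>1 * A t0 * (\<sigma>1 * A1 t0) + \<sigma>2 * B t0 * (\<sigma>2 * B1 t0) = 0"
    proof -
      have "\<sigma>1 * A t0 * (\<sigma>1 * A1 t0) + \<sigma>2 * B t0 * (\<sigma>2 * B1 t0)
          = \<sigma>1^2 * (A t0 * A1 t0) + \<sigma>2^2 * (B t0 * B1 t0)" by (simp add: power2_eq_square algebra_simps)
      then show ?thesis using sq1 sq2 perp by simp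
    qed
    show "0 < \<sigma>2 * B1 t0" by fact
    show "(1/\<kappa>)^2 \<le> (\<sigma>1 * A t0)^2 + (\<sigma>2 * B t0)^2" unfolding e[OF sq1] e[OF sq2] by (rule far)
  qed
  then show ?thesis unfolding e[OF sq1] e[OF sq2] .
qed

lemma curv_alg:
  fixes p1 p2 v1 v2 a1 a2 \<kappa> :: real
  assumes perp: "p1 * v1 + p2 * v2 = 0" and Np: "v1^2 + v2^2 > 0"
    and sec: "v1^2 + v2^2 + p1*a1 + p2*a2 \<le> 0"
    and cv: "\<bar>v1*a2 - v2*a1\<bar> \<le> \<kappa> * sqrt (v1^2 + v2^2) ^ 3" and kp: "\<kappa> > 0"
  shows "(1/\<kappa>)^2 \<le> p1^2 + p2^2"
proof -
  define N where "N = v1^2 + v2^2"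
  define q where "q = p2 * v1 - p1 * v2"
  define c where "c = v1*a2 - v2*a1"
  define P where "P = p1^2 + p2^2"
  define pa where "pa = p1*a1 + p2*a2"
  have N0: "N > 0" using Np by (simp add: N_def)
  have id1: "pa * N = q * c + (p1 * v1 + p2 * v2) * (a1 * v1 + a2 * v2)"
    unfolding pa_def N_def q_def c_def by algebra
  have id2: "q^2 + (p1 * v1 + p2 * v2)^2 = P * N"
    unfolding P_def N_def q_def by algebra
  have qc: "pa * N = q * c" using id1 perp by simp
  have q2: "q^2 = P * N" using id2 perp by simp
  have "N \<le> - pa" using sec by (simp add: N_def pa_def)
  then have "N * N \<le> - pa * N" using N0 by - (rule mult_right_mono, auto)
  then have a: "N * N \<le> - (q * c)" using qc by simp
  have "(N * N)^2 \<le> (- (q * c))^2" using a N0 by - (rule power_mono, auto)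
  then have b: "(N * N)^2 \<le> q^2 * c^2" by (simp add: power_mult_distrib)
  have m2: "(sqrt N)^2 = N" using N0 by simp
  have "\<bar>c\<bar> \<le> \<kappa> * sqrt N ^ 3" using cv by (simp add: c_def N_def)
  then have "\<bar>c\<bar>^2 \<le> (\<kappa> * sqrt N ^ 3)^2" by - (rule power_mono, auto)
  moreover have "(\<kappa> * sqrt N ^ 3)^2 = \<kappa>^2 * N^3"
  proof -
    have "(\<kappa> * sqrt N ^ 3)^2 = \<kappa>^2 * ((sqrt N)^2)^3" by (simp add: power_mult_distrib power_mult[symmetric] mult.commute)
    then show ?thesis using m2 by simp
  qed
  ultimately have c2: "c^2 \<le> \<kappa>^2 * N^3" by simp
  have "q^2 * c^2 \<le> (P * N) * (\<kappa>^2 * N^3)" unfolding q2[symmetric]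
    using c2 by (rule mult_left_mono) simp
  with b have "(N*N)^2 \<le> (P * \<kappa>^2) * (N*N)^2" by (simp add: power2_eq_square power3_eq_cube mult_ac)
  moreover have "(N*N)^2 > 0" using N0 by simp
  ultimately have "1 \<le> P * \<kappa>^2" by (simp add: mult_le_cancel_right1)
  then have "1 / \<kappa>^2 \<le> P" using kp by (simp add: divide_le_eq)
  then show ?thesis by (simp add: P_def power_divide)
qed

lemma dsq:
  fixes g1 g2 :: "real \<Rightarrow> real"
  assumes "(g1 has_real_derivative v1) (at t within S)" "(g2 has_real_derivative v2) (at t within S)"
  shows "((\<lambda>t. g1 t ^ 2 + g2 t ^ 2) has_real_derivative 2 * (g1 t * v1 + g2 t * v2)) (at t within S)"
  using DERIV_add[OF DERIV_power[OF assms(1), of 2] DERIV_power[OF assms(2), of 2]]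
  by (simp add: algebra_simps)

lemma dphi1:
  fixes g1 g2 w1 w2 :: "real \<Rightarrow> real"
  assumes "(g1 has_real_derivative v1) (at t within S)" "(g2 has_real_derivative v2) (at t within S)"
    "(w1 has_real_derivative b1) (at t within S)" "(w2 has_real_derivative b2) (at t within S)"
  shows "((\<lambda>t. 2 * (g1 t * w1 t + g2 t * w2 t)) has_real_derivative
      2 * (v1 * w1 t + b1 * g1 t + (v2 * w2 t + b2 * g2 t))) (at t within S)"
  by (intro DERIV_cmult DERIV_add DERIV_mult assms)

lemma stay_in:
  fixes g1 g2 v1 v2 a1 a2 :: "real \<Rightarrow> real" and T \<kappa> r \<rho> s0 s1 :: real
  assumes dg1: "\<And>t. t \<in> {0..T} \<Longrightarrow> (g1 has_real_derivative v1 t) (at t within {0..T})"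
  and dg2: "\<And>t. t \<in> {0..T} \<Longrightarrow> (g2 has_real_derivative v2 t) (at t within {0..T})"
  and dv1: "\<And>t. t \<in> {0..T} \<Longrightarrow> (v1 has_real_derivative a1 t) (at t within {0..T})"
  and dv2: "\<And>t. t \<in> {0..T} \<Longrightarrow> (v2 has_real_derivative a2 t) (at t within {0..T})"
  and nz: "\<And>t. t \<in> {0..T} \<Longrightarrow> v1 t ^ 2 + v2 t ^ 2 > 0"
  and curv: "\<And>t. t \<in> {0..T} \<Longrightarrow> \<bar>v1 t * a2 t - v2 t * a1 t\<bar> \<le> \<kappa> * (sqrt (v1 t ^ 2 + v2 t ^ 2)) ^ 3"
  and kpos: "0 < \<kappa>" and rk: "r * \<kappa> < 1" and rho: "0 \<le> \<rho>" "\<rho> \<le> r"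
  and s: "0 \<le> s0" "s0 \<le> s1" "s1 \<le> T"
  and box: "\<And>t. t \<in> {s0..s1} \<Longrightarrow> \<bar>g1 t\<bar> \<le> r \<and> \<bar>g2 t\<bar> \<le> r"
  and e0: "g1 s0 ^ 2 + g2 s0 ^ 2 \<le> \<rho>^2" and e1: "g1 s1 ^ 2 + g2 s1 ^ 2 \<le> \<rho>^2"
  and t: "t \<in> {s0..s1}"
  shows "g1 t ^ 2 + g2 t ^ 2 \<le> \<rho>^2"
proof -
  define \<phi> where "\<phi> t = g1 t ^ 2 + g2 t ^ 2" for t
  have sub: "{s0..s1} \<subseteq> {0..T}" using s by auto
  have dphi: "(\<phi> has_real_derivative 2 * (g1 t * v1 t + g2 t * v2 t)) (at t within {0..T})"
    if "t \<in> {0..T}" for t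
    unfolding \<phi>_def[abs_def] by (rule dsq[OF dg1[OF that] dg2[OF that]])
  have cont: "continuous_on {s0..s1} \<phi>"
    by (rule continuous_on_subset[OF DERIV_continuous_on[OF dphi] sub])
  obtain tm where tm: "tm \<in> {s0..s1}" and mx: "\<And>y. y \<in> {s0..s1} \<Longrightarrow> \<phi> y \<le> \<phi> tm"
    using continuous_attains_sup[OF compact_Icc _ cont] s by auto
  have r0: "0 \<le> r" using rho by simp
  have rR: "r < 1/\<kappa>" using rk kpos by (simp add: field_simps)
  have rR2: "r^2 < (1/\<kappa>)^2" using r0 rR by (simp add: power_strict_mono)
  have "\<phi> tm \<le> \<rho>^2"
  proof (rule ccontr)
    assume big: "\<not> \<phi> tm \<le> \<rho>^2"
    have tm0: "tm \<noteq> s0" using big e0 by (auto simp: \<phi>_def)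
    have tm1: "tm \<noteq> s1" using big e1 by (auto simp: \<phi>_def)
    have a1': "s0 < tm" "tm < s1" using tm tm0 tm1 by auto
    have tmT: "0 < tm" "tm < T" using a1' s by auto
    have tmin: "tm \<in> {0..T}" using tmT by auto
    have atT: "\<And>u. 0 < u \<Longrightarrow> u < T \<Longrightarrow> at u within {0..T} = at u" by (rule at_within_Icc_at)
    have d1: "(\<phi> has_real_derivative 2 * (g1 u * v1 u + g2 u * v2 u)) (at u)" if "s0 < u" "u < s1" for u
    proof -
      have "u \<in> {0..T}" using that s by auto
      from dphi[OF this] show ?thesis using atT[of u] that s by simp
    qed
    have d2: "((\<lambda>u. 2 * (g1 u * v1 u + g2 u * v2 u)) has_real_derivative
       2 * (v1 tm * v1 tm + a1 tm * g1 tm + (v2 tm * v2 tm + a2 tm * g2 tm))) (at tm)"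
      using dphi1[OF dg1[OF tmin] dg2[OF tmin] dv1[OF tmin] dv2[OF tmin]] atT[OF tmT] by simp
    define \<delta> where "\<delta> = min (tm - s0) (s1 - tm)"
    have \<delta>0: "\<delta> > 0" using a1' by (simp add: \<delta>_def)
    have z: "2 * (g1 tm * v1 tm + g2 tm * v2 tm) = 0"
    proof (rule DERIV_local_max[OF d1[OF a1'] \<delta>0])
      show "\<forall>y. \<bar>tm - y\<bar> < \<delta> \<longrightarrow> \<phi> y \<le> \<phi> tm"
      proof (intro allI impI)
        fix y assume "\<bar>tm - y\<bar> < \<delta>"
        then have "y \<in> {s0..s1}" unfolding \<delta>_def by (auto simp: abs_less_iff)
        then show "\<phi> y \<le> \<phi> tm" by (rule mx)
      qed
    qed
    have "2 * (v1 tm * v1 tm + a1 tm * g1 tm + (v2 tm * v2 tm + a2 tm * g2 tm)) \<le> 0"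
      by (rule second_test[OF a1' d1 d2 z]) (use mx in auto)
    then have sec: "v1 tm ^ 2 + v2 tm ^ 2 + g1 tm * a1 tm + g2 tm * a2 tm \<le> 0"
      by (simp add: power2_eq_square mult.commute)
    have perp: "g1 tm * v1 tm + g2 tm * v2 tm = 0" using z by simp
    have far: "(1/\<kappa>)^2 \<le> g1 tm ^ 2 + g2 tm ^ 2"
      by (rule curv_alg[OF perp nz[OF tmin] sec curv[OF tmin] kpos])
    have bx: "\<bar>g1 tm\<bar> \<le> r" "\<bar>g2 tm\<bar> \<le> r" using box[OF tm] by auto
    have sqle: "u^2 \<le> r^2" if "\<bar>u\<bar> \<le> r" for u :: real
      using that by (metis abs_ge_zero power2_abs power_mono)
    have p1nz: "g1 tm \<noteq> 0"
    proof
      assume "g1 tm = 0"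
      then show False using far sqle[OF bx(2)] rR2 by simp
    qed
    have p2nz: "g2 tm \<noteq> 0"
    proof
      assume "g2 tm = 0"
      then show False using far sqle[OF bx(1)] rR2 by simp
    qed
    define \<sigma>1 where "\<sigma>1 = sgn (g1 tm)"
    define \<sigma>2 where "\<sigma>2 = sgn (g2 tm)"
    have s1: "\<bar>\<sigma>1\<bar> = 1" using p1nz by (simp add: \<sigma>1_def abs_sgn)
    have s2: "\<bar>\<sigma>2\<bar> = 1" using p2nz by (simp add: \<sigma>2_def abs_sgn)
    have ss1: "\<sigma>1 * \<sigma>1 = 1" using s1 by (metis abs_mult_self_eq mult_1)
    have ss2: "\<sigma>2 * \<sigma>2 = 1" using s2 by (metis abs_mult_self_eq mult_1)
    have q1: "\<sigma>1 * g1 tm \<ge> 0" by (simp add: \<sigma>1_def sgn_if)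
    have q2: "\<sigma>2 * g2 tm \<ge> 0" by (simp add: \<sigma>2_def sgn_if)
    have tmS: "tm \<le> s1" using a1' by simp
    have subT: "{tm..s1} \<subseteq> {0..T}" using tmT s by auto
    have inT: "u \<in> {0..T}" if "u \<in> {tm..s1}" for u using that subT by auto
    have v2nz: "v2 tm \<noteq> 0"
    proof
      assume "v2 tm = 0"
      then have "v1 tm = 0" using perp p1nz by simp
      then show False using nz[OF tmin] \<open>v2 tm = 0\<close> by simp
    qed
    have fin: "(1/\<kappa>)^2 \<le> g1 s1 ^ 2 + g2 s1 ^ 2"
    proof (cases "\<sigma>2 * v2 tm > 0")
      case True
      show ?thesis
      proof (rule core_signed[of tm s1 g1 v1 g2 v2 a1 a2 \<kappa> r \<sigma>1 \<sigma>2])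
        fix u assume u: "u \<in> {tm..s1}"
        show "(g1 has_real_derivative v1 u) (at u within {tm..s1})" by (rule DERIV_subset[OF dg1[OF inT[OF u]] subT])
        show "(g2 has_real_derivative v2 u) (at u within {tm..s1})" by (rule DERIV_subset[OF dg2[OF inT[OF u]] subT])
        show "(v1 has_real_derivative a1 u) (at u within {tm..s1})" by (rule DERIV_subset[OF dv1[OF inT[OF u]] subT])
        show "(v2 has_real_derivative a2 u) (at u within {tm..s1})" by (rule DERIV_subset[OF dv2[OF inT[OF u]] subT])
        show "0 < v1 u ^ 2 + v2 u ^ 2" using nz[OF inT[OF u]] by simp
        show "\<bar>v1 u * a2 u - v2 u * a1 u\<bar> \<le> \<kappa> * sqrt (v1 u ^ 2 + v2 u ^ 2) ^ 3"
          using curv[OF inT[OF u]] by simp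
        show "\<bar>g1 u\<bar> \<le> r \<and> \<bar>g2 u\<bar> \<le> r" using box[of u] u a1' by auto
      qed (use tmS kpos rk s1 s2 q1 q2 perp True far in auto)
    next
      case False
      have "\<sigma>2 * v2 tm \<noteq> 0" using v2nz p2nz by (simp add: \<sigma>2_def sgn_if)
      with False have neg: "\<sigma>2 * v2 tm < 0" by linarith
      have "\<sigma>1 * v1 tm * (\<sigma>1 * g1 tm) = v1 tm * g1 tm * \<sigma>1^2" by (simp add: power2_eq_square mult_ac)
      also have "\<dots> = v1 tm * g1 tm" using ss1 by (simp add: power2_eq_square)
      also have "\<dots> = - (v2 tm * g2 tm)" using perp by (simp add: mult.commute)
      also have "\<dots> = - (\<sigma>2 * v2 tm * (\<sigma>2 * g2 tm))" using ss2 by (simp add: power2_eq_square mult_ac)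
      finally have eqv: "\<sigma>1 * v1 tm * (\<sigma>1 * g1 tm) = - (\<sigma>2 * v2 tm * (\<sigma>2 * g2 tm))" .
      have "\<sigma>2 * g2 tm > 0" using q2 p2nz s2 by (simp add: \<sigma>2_def sgn_if)
      then have "- (\<sigma>2 * v2 tm * (\<sigma>2 * g2 tm)) > 0" using neg by (simp add: mult_neg_pos)
      then have "\<sigma>1 * v1 tm * (\<sigma>1 * g1 tm) > 0" using eqv by simp
      then have up: "\<sigma>1 * v1 tm > 0" using q1 by (simp add: zero_less_mult_iff)
      have "(1/\<kappa>)^2 \<le> g2 s1 ^ 2 + g1 s1 ^ 2"
      proof (rule core_signed[of tm s1 g2 v2 g1 v1 a2 a1 \<kappa> r \<sigma>2 \<sigma>1])
        fix u assume u: "u \<in> {tm..s1}"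
        show "(g2 has_real_derivative v2 u) (at u within {tm..s1})" by (rule DERIV_subset[OF dg2[OF inT[OF u]] subT])
        show "(g1 has_real_derivative v1 u) (at u within {tm..s1})" by (rule DERIV_subset[OF dg1[OF inT[OF u]] subT])
        show "(v2 has_real_derivative a2 u) (at u within {tm..s1})" by (rule DERIV_subset[OF dv2[OF inT[OF u]] subT])
        show "(v1 has_real_derivative a1 u) (at u within {tm..s1})" by (rule DERIV_subset[OF dv1[OF inT[OF u]] subT])
        show "0 < v2 u ^ 2 + v1 u ^ 2" using nz[OF inT[OF u]] by simp
        have "\<bar>v2 u * a1 u - v1 u * a2 u\<bar> = \<bar>v1 u * a2 u - v2 u * a1 u\<bar>" by (simp add: abs_minus_commute)
        then show "\<bar>v2 u * a1 u - v1 u * a2 u\<bar> \<le> \<kappa> * sqrt (v2 u ^ 2 + v1 u ^ 2) ^ 3"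
          using curv[OF inT[OF u]] by (simp add: add.commute)
        show "\<bar>g2 u\<bar> \<le> r \<and> \<bar>g1 u\<bar> \<le> r" using box[of u] u a1' by auto
      next
        show "tm \<le> s1" by fact
        show "0 < \<kappa>" by fact
        show "r * \<kappa> < 1" by fact
        show "\<bar>\<sigma>2\<bar> = 1" by fact
        show "\<bar>\<sigma>1\<bar> = 1" by fact
        show "0 \<le> \<sigma>2 * g2 tm" by fact
        show "0 \<le> \<sigma>1 * g1 tm" by fact
        show "g2 tm * v2 tm + g1 tm * v1 tm = 0" using perp by simp
        show "0 < \<sigma>1 * v1 tm" by fact
        show "(1/\<kappa>)^2 \<le> g2 tm ^ 2 + g1 tm ^ 2" using far by simp
      qed
      then show ?thesis by simp
    qed
    have "\<rho>^2 \<le> r^2" using rho by (simp add: power_mono)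
    then show False using fin e1 rR2 by linarith
  qed
  moreover have "\<phi> t \<le> \<phi> tm" by (rule mx[OF t])
  ultimately show ?thesis by (simp add: \<phi>_def)
qed

lemma trace_mono: "K \<subseteq> K' \<Longrightarrow> trace_in \<gamma> T K a b \<Longrightarrow> trace_in \<gamma> T K' a b"
  unfolding trace_in_def by blast

lemma maxint_trace: "(a, b) \<in> maxint \<gamma> T K \<Longrightarrow> trace_in \<gamma> T K a b"
  unfolding maxint_def by blast

lemma maxint_max: "(a, b) \<in> maxint \<gamma> T K \<Longrightarrow> trace_in \<gamma> T K a' b' \<Longrightarrow> {a..b} \<subseteq> {a'..b'} \<Longrightarrow> a' = a \<and> b' = b"
  unfolding maxint_def by blast

lemma maxint_overlap:
  assumes m: "(a, b) \<in> maxint \<gamma> T K" and tr: "trace_in \<gamma> T K a' b'"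
    and c: "c \<in> {a..b}" "c \<in> {a'..b'}"
  shows "a \<le> a' \<and> b' \<le> b"
proof -
  define A where "A = min a a'"
  define B where "B = max b b'"
  have t1: "trace_in \<gamma> T K a b" by (rule maxint_trace[OF m])
  have "trace_in \<gamma> T K A B"
    unfolding trace_in_def
  proof (intro conjI)
    show "0 \<le> A" "A \<le> B" "B \<le> T" using t1 tr c unfolding trace_in_def A_def B_def by auto
    show "\<gamma> ` {A..B} \<subseteq> K"
    proof
      fix y assume "y \<in> \<gamma> ` {A..B}"
      then obtain s where s: "s \<in> {A..B}" and y: "y = \<gamma> s" by auto
      have "s \<in> {a..b} \<or> s \<in> {a'..b'}" using s c unfolding A_def B_def by auto
      then show "y \<in> K" using t1 tr y unfolding trace_in_def by auto
    qed
  qed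
  moreover have "{a..b} \<subseteq> {A..B}" unfolding A_def B_def by auto
  ultimately have "A = a \<and> B = b" by (rule maxint_max[OF m])
  then show ?thesis unfolding A_def B_def by auto
qed

lemma maxint_exists:
  assumes K: "closed K" and cont: "continuous_on {0..T} \<gamma>" and t: "t \<in> {0..T}" and gt: "\<gamma> t \<in> K"
  shows "\<exists>a b. (a, b) \<in> maxint \<gamma> T K \<and> a \<le> t \<and> t \<le> b"
proof -
  define E where "E = {0..T} \<inter> \<gamma> -` K"
  have Ecl: "closed E" unfolding E_def by (rule continuous_closed_preimage[OF cont closed_atLeastAtMost K])
  have tE: "t \<in> E" using t gt by (simp add: E_def)
  define La where "La = {s. 0 \<le> s \<and> s \<le> t \<and> {s..t} \<subseteq> E}"
  define Lb where "Lb = {s. t \<le> s \<and> s \<le> T \<and> {t..s} \<subseteq> E}"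
  have tLa: "t \<in> La" using t tE by (auto simp: La_def)
  have tLb: "t \<in> Lb" using t tE by (auto simp: Lb_def)
  have bLa: "bdd_below La" by (rule bdd_belowI[of _ 0]) (auto simp: La_def)
  have bLb: "bdd_above Lb" by (rule bdd_aboveI[of _ T]) (auto simp: Lb_def)
  define a where "a = Inf La"
  define b where "b = Sup Lb"
  have at: "a \<le> t" unfolding a_def by (rule cInf_lower[OF tLa bLa])
  have tb: "t \<le> b" unfolding b_def by (rule cSup_upper[OF tLb bLb])
  have a0: "0 \<le> a" unfolding a_def by (rule cInf_greatest) (use tLa in \<open>auto simp: La_def\<close>)
  have bT: "b \<le> T" unfolding b_def by (rule cSup_least) (use tLb in \<open>auto simp: Lb_def\<close>)
  have left: "{a<..t} \<subseteq> E"
  proof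
    fix u assume u: "u \<in> {a<..t}"
    then have "Inf La < u" by (simp add: a_def)
    then obtain s where s: "s \<in> La" "s < u" using cInf_less_iff[of La u] tLa bLa by auto
    then show "u \<in> E" using u by (auto simp: La_def)
  qed
  have right: "{t..<b} \<subseteq> E"
  proof
    fix u assume u: "u \<in> {t..<b}"
    then have "u < Sup Lb" by (simp add: b_def)
    then obtain s where s: "s \<in> Lb" "u < s" using less_cSup_iff[of Lb u] tLb bLb by auto
    then show "u \<in> E" using u by (auto simp: Lb_def)
  qed
  have left': "{a..t} \<subseteq> E"
  proof (cases "a < t")
    case True
    have "closure {a<..t} \<subseteq> E" using left Ecl by (simp add: closure_minimal)
    then show ?thesis using True by simp
  next
    case False
    then show ?thesis using at tE by auto
  qed
  have right': "{t..b} \<subseteq> E"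
  proof (cases "t < b")
    case True
    have "closure {t..<b} \<subseteq> E" using right Ecl by (simp add: closure_minimal)
    then show ?thesis using True by simp
  next
    case False
    then show ?thesis using tb tE by auto
  qed
  have ab: "{a..b} \<subseteq> E"
  proof
    fix x assume x: "x \<in> {a..b}"
    show "x \<in> E"
    proof (cases "x \<le> t")
      case True
      then show ?thesis using x left' by auto
    next
      case False
      then show ?thesis using x right' by auto
    qed
  qed
  have tr: "trace_in \<gamma> T K a b" unfolding trace_in_def using ab a0 bT at tb by (auto simp: E_def)
  have mx: "\<forall>a' b'. trace_in \<gamma> T K a' b' \<and> {a..b} \<subseteq> {a'..b'} \<longrightarrow> a' = a \<and> b' = b"
  proof (intro allI impI)
    fix a' b' assume h: "trace_in \<gamma> T K a' b' \<and> {a..b} \<subseteq> {a'..b'}"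
    then have h1: "a' \<le> a" "b \<le> b'" "0 \<le> a'" "b' \<le> T" "\<gamma> ` {a'..b'} \<subseteq> K" using at tb
      by (auto simp: trace_in_def)
    have "a' \<in> La" using h1 at tb unfolding La_def E_def by (auto simp: image_subset_iff)
    then have "a \<le> a'" unfolding a_def by (rule cInf_lower[OF _ bLa])
    moreover have "b' \<in> Lb" using h1 at tb unfolding Lb_def E_def by (auto simp: image_subset_iff)
    then have "b' \<le> b" unfolding b_def by (rule cSup_upper[OF _ bLb])
    ultimately show "a' = a \<and> b' = b" using h1 by auto
  qed
  have "(a, b) \<in> maxint \<gamma> T K" unfolding maxint_def using tr mx by simp
  then show ?thesis using at tb by blast
qed

lemma maxint_cover:
  assumes K: "closed K" and cont: "continuous_on {0..T} \<gamma>" and tr: "trace_in \<gamma> T K a' b'"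
  shows "\<exists>a b. (a, b) \<in> maxint \<gamma> T K \<and> a \<le> a' \<and> b' \<le> b"
proof -
  have a'in: "a' \<in> {0..T}" "\<gamma> a' \<in> K" using tr unfolding trace_in_def by auto
  obtain a b where m: "(a, b) \<in> maxint \<gamma> T K" and ab: "a \<le> a'" "a' \<le> b"
    using maxint_exists[OF K cont a'in] by blast
  have "a \<le> a' \<and> b' \<le> b"
    by (rule maxint_overlap[OF m tr, of a']) (use ab tr in \<open>auto simp: trace_in_def\<close>)
  then show ?thesis using m by blast
qed

lemma ecard_inj:
  assumes "inj_on f A" "f ` A \<subseteq> B"
  shows "ecard A \<le> ecard B"
proof (cases "finite B")
  case True
  then have fA: "finite (f ` A)" using assms(2) finite_subset by blast
  then have "finite A" using assms(1) finite_imageD by blast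
  moreover have "card A \<le> card B"
    using card_inj_on_le[OF assms True] .
  ultimately show ?thesis using True by (simp add: ecard_def)
next
  case False
  then show ?thesis by (simp add: ecard_def)
qed

lemma vd_fst: "(f has_vector_derivative v) F \<Longrightarrow> ((\<lambda>t. fst (f t)) has_real_derivative fst v) F"
proof -
  assume "(f has_vector_derivative v) F"
  then have "(f has_derivative (\<lambda>x. x *\<^sub>R v)) F" by (simp add: has_vector_derivative_def)
  from has_derivative_fst[OF this] have "((\<lambda>t. fst (f t)) has_derivative (\<lambda>x. x *\<^sub>R fst v)) F" by simp
  then show ?thesis by (simp add: has_real_derivative_iff_has_vector_derivative has_vector_derivative_def)
qed

lemma vd_snd: "(f has_vector_derivative v) F \<Longrightarrow> ((\<lambda>t. snd (f t)) has_real_derivative snd v) F"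
proof -
  assume "(f has_vector_derivative v) F"
  then have "(f has_derivative (\<lambda>x. x *\<^sub>R v)) F" by (simp add: has_vector_derivative_def)
  from has_derivative_snd[OF this] have "((\<lambda>t. snd (f t)) has_derivative (\<lambda>x. x *\<^sub>R snd v)) F" by simp
  then show ?thesis by (simp add: has_real_derivative_iff_has_vector_derivative has_vector_derivative_def)
qed

lemma closed_disk: "closed (disk r x)"
  unfolding disk_def by (intro closed_Collect_le continuous_intros)

lemma closed_square: "closed (square r x)"
  unfolding square_def by (intro closed_Collect_le continuous_intros)

lemma stay_gamma:
  fixes \<gamma> \<gamma>' \<gamma>'' :: "real \<Rightarrow> real \<times> real" and T \<kappa>max r \<rho> s0 s1 :: real
  assumes d1: "\<And>t. t \<in> {0..T} \<Longrightarrow> (\<gamma> has_vector_derivative \<gamma>' t) (at t within {0..T})"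
    and d2: "\<And>t. t \<in> {0..T} \<Longrightarrow> (\<gamma>' has_vector_derivative \<gamma>'' t) (at t within {0..T})"
    and nz: "\<And>t. t \<in> {0..T} \<Longrightarrow> \<gamma>' t \<noteq> 0"
    and kp: "0 < \<kappa>max"
    and cv: "\<And>t. t \<in> {0..T} \<Longrightarrow> curvature (\<gamma>' t) (\<gamma>'' t) \<le> \<kappa>max"
    and rk: "r < 1 / \<kappa>max" and rho: "0 \<le> \<rho>" "\<rho> \<le> r"
    and s: "0 \<le> s0" "s0 \<le> s1" "s1 \<le> T"
    and sq: "\<gamma> ` {s0..s1} \<subseteq> square r x"
    and e0: "\<gamma> s0 \<in> disk \<rho> x" and e1: "\<gamma> s1 \<in> disk \<rho> x"
  shows "\<gamma> ` {s0..s1} \<subseteq> disk \<rho> x"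
proof -
  define g1 where "g1 t = fst (\<gamma> t) - fst x" for t
  define g2 where "g2 t = snd (\<gamma> t) - snd x" for t
  define v1 where "v1 t = fst (\<gamma>' t)" for t
  define v2 where "v2 t = snd (\<gamma>' t)" for t
  define a1 where "a1 t = fst (\<gamma>'' t)" for t
  define a2 where "a2 t = snd (\<gamma>'' t)" for t
  have dg1: "(g1 has_real_derivative v1 t) (at t within {0..T})" if "t \<in> {0..T}" for t
    unfolding g1_def[abs_def] v1_def using DERIV_diff[OF vd_fst[OF d1[OF that]] DERIV_const] by simp
  have dg2: "(g2 has_real_derivative v2 t) (at t within {0..T})" if "t \<in> {0..T}" for t
    unfolding g2_def[abs_def] v2_def using DERIV_diff[OF vd_snd[OF d1[OF that]] DERIV_const] by simp
  have dv1: "(v1 has_real_derivative a1 t) (at t within {0..T})" if "t \<in> {0..T}" for t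
    unfolding v1_def[abs_def] a1_def using vd_fst[OF d2[OF that]] by simp
  have dv2: "(v2 has_real_derivative a2 t) (at t within {0..T})" if "t \<in> {0..T}" for t
    unfolding v2_def[abs_def] a2_def using vd_snd[OF d2[OF that]] by simp
  have nrm: "norm (\<gamma>' t) = sqrt (v1 t ^ 2 + v2 t ^ 2)" for t
  proof -
    obtain p q where pq: "\<gamma>' t = (p, q)" by fastforce
    show ?thesis by (simp add: v1_def v2_def pq norm_Pair)
  qed
  have nz2: "v1 t ^ 2 + v2 t ^ 2 > 0" if "t \<in> {0..T}" for t
  proof -
    have "norm (\<gamma>' t) > 0" using nz[OF that] by simp
    then show ?thesis unfolding nrm by simp
  qed
  have cv2: "\<bar>v1 t * a2 t - v2 t * a1 t\<bar> \<le> \<kappa>max * (sqrt (v1 t ^ 2 + v2 t ^ 2)) ^ 3" if "t \<in> {0..T}" for t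
  proof -
    have np: "norm (\<gamma>' t) ^ 3 > 0" using nz[OF that] by simp
    have "\<bar>v1 t * a2 t - v2 t * a1 t\<bar> / norm (\<gamma>' t) ^ 3 \<le> \<kappa>max"
      using cv[OF that] by (simp add: curvature_def v1_def v2_def a1_def a2_def)
    then have "\<bar>v1 t * a2 t - v2 t * a1 t\<bar> \<le> \<kappa>max * norm (\<gamma>' t) ^ 3"
      using np by (simp add: pos_divide_le_eq)
    then show ?thesis unfolding nrm .
  qed
  have rk2: "r * \<kappa>max < 1" using rk kp by (simp add: field_simps)
  have box: "\<bar>g1 t\<bar> \<le> r \<and> \<bar>g2 t\<bar> \<le> r" if "t \<in> {s0..s1}" for t
  proof -
    have "\<gamma> t \<in> square r x" using sq that by auto
    then show ?thesis by (simp add: square_def g1_def g2_def)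
  qed
  have ee0: "g1 s0 ^ 2 + g2 s0 ^ 2 \<le> \<rho>^2" using e0 by (simp add: disk_def g1_def g2_def)
  have ee1: "g1 s1 ^ 2 + g2 s1 ^ 2 \<le> \<rho>^2" using e1 by (simp add: disk_def g1_def g2_def)
  show ?thesis
  proof
    fix y assume "y \<in> \<gamma> ` {s0..s1}"
    then obtain t where t: "t \<in> {s0..s1}" and y: "y = \<gamma> t" by auto
    have "g1 t ^ 2 + g2 t ^ 2 \<le> \<rho>^2"
      by (rule stay_in[OF dg1 dg2 dv1 dv2 nz2 cv2 kp rk2 rho s box ee0 ee1 t])
    then show "y \<in> disk \<rho> x" by (simp add: disk_def g1_def g2_def y)
  qed
qed

lemma sq_abs: "(u::real)^2 \<le> c^2 \<Longrightarrow> 0 \<le> c \<Longrightarrow> \<bar>u\<bar> \<le> c"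
  by (metis abs_le_square_iff abs_of_nonneg)

lemma abs_sq: "\<bar>u::real\<bar> \<le> c \<Longrightarrow> u^2 \<le> c^2"
  by (metis abs_ge_zero power2_abs power_mono)

theorem theorem1:
  fixes \<gamma> \<gamma>' \<gamma>'' :: "real \<Rightarrow> real \<times> real" and T \<kappa>max r1 r2 :: real
  assumes "0 < T"
    and "\<And>t. t \<in> {0..T} \<Longrightarrow> (\<gamma> has_vector_derivative \<gamma>' t) (at t within {0..T})"
    and "\<And>t. t \<in> {0..T} \<Longrightarrow> (\<gamma>' has_vector_derivative \<gamma>'' t) (at t within {0..T})"
    and "continuous_on {0..T} \<gamma>''"
    and "\<And>t. t \<in> {0..T} \<Longrightarrow> \<gamma>' t \<noteq> 0"
    and "0 < \<kappa>max"
    and "\<And>t. t \<in> {0..T} \<Longrightarrow> curvature (\<gamma>' t) (\<gamma>'' t) \<le> \<kappa>max"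
    and "0 < r1"
    and "sqrt 2 * r1 \<le> r2" and "r2 < 1 / \<kappa>max"
  shows "count_ball \<gamma> T r1 x \<le> count_robust_square \<gamma> T r1 r2 x \<and>
         count_robust_square \<gamma> T r1 r2 x \<le> count_ball \<gamma> T r2 x"
proof -
  note d1 = assms(2) and d2 = assms(3) and nz = assms(5) and kp = assms(6) and cv = assms(7)
  have r1pos: "0 < r1" by fact
  have r12: "sqrt 2 * r1 \<le> r2" by fact
  have r2k: "r2 < 1 / \<kappa>max" by fact
  have cont: "continuous_on {0..T} \<gamma>"
    unfolding continuous_on_eq_continuous_within using d1 by (blast intro: has_vector_derivative_continuous)
  have s2pos: "sqrt 2 \<ge> 1" by simp
  have r1r2: "r1 \<le> r2" using r12 r1pos s2pos by (meson mult_le_cancel_right1 order_trans less_le_not_le)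
  define B1 where "B1 = disk r1 x"
  define S1 where "S1 = square r1 x"
  define S2 where "S2 = square r2 x"
  define B2 where "B2 = disk r2 x"
  have cB1: "closed B1" and cS1: "closed S1" and cS2: "closed S2" and cB2: "closed B2"
    by (simp_all add: B1_def S1_def S2_def B2_def closed_disk closed_square)
  have B1S1: "B1 \<subseteq> S1"
  proof
    fix y assume "y \<in> B1"
    then have h: "(fst y - fst x)^2 + (snd y - snd x)^2 \<le> r1^2" by (simp add: B1_def disk_def)
    have "(fst y - fst x)^2 \<le> r1^2" using h zero_le_power2[of "snd y - snd x"] by linarith
    then have h1: "\<bar>fst y - fst x\<bar> \<le> r1" using r1pos by (intro sq_abs) auto
    have "(snd y - snd x)^2 \<le> r1^2" using h zero_le_power2[of "fst y - fst x"] by linarith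
    then have h2: "\<bar>snd y - snd x\<bar> \<le> r1" using r1pos by (intro sq_abs) auto
    show "y \<in> S1" using h1 h2 by (simp add: S1_def square_def)
  qed
  have S1B2: "S1 \<subseteq> B2"
  proof
    fix y assume "y \<in> S1"
    then have h: "\<bar>fst y - fst x\<bar> \<le> r1" "\<bar>snd y - snd x\<bar> \<le> r1" by (simp_all add: S1_def square_def)
    have "(fst y - fst x)^2 \<le> r1^2" using h by (intro abs_sq) auto
    moreover have "(snd y - snd x)^2 \<le> r1^2" using h by (intro abs_sq) auto
    ultimately have "(fst y - fst x)^2 + (snd y - snd x)^2 \<le> 2 * r1^2" by simp
    also have "\<dots> = (sqrt 2 * r1)^2" by (simp add: power_mult_distrib)
    also have "\<dots> \<le> r2^2" using r12 r1pos by (simp add: power_mono)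
    finally show "y \<in> B2" by (simp add: B2_def disk_def)
  qed
  have B2S2: "B2 \<subseteq> S2"
  proof
    fix y assume "y \<in> B2"
    then have h: "(fst y - fst x)^2 + (snd y - snd x)^2 \<le> r2^2" by (simp add: B2_def disk_def)
    have r2pos: "0 \<le> r2" using r1r2 r1pos by simp
    have "(fst y - fst x)^2 \<le> r2^2" using h zero_le_power2[of "snd y - snd x"] by linarith
    then have h1: "\<bar>fst y - fst x\<bar> \<le> r2" using r2pos by (intro sq_abs) auto
    have "(snd y - snd x)^2 \<le> r2^2" using h zero_le_power2[of "fst y - fst x"] by linarith
    then have h2: "\<bar>snd y - snd x\<bar> \<le> r2" using r2pos by (intro sq_abs) auto
    show "y \<in> S2" using h1 h2 by (simp add: S2_def square_def)
  qed
  have S1S2: "S1 \<subseteq> S2" using S1B2 B2S2 by blast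
  have stay: "\<gamma> ` {s0..s1} \<subseteq> B1"
    if "0 \<le> s0" "s0 \<le> s1" "s1 \<le> T" "\<gamma> ` {s0..s1} \<subseteq> S2" "\<gamma> s0 \<in> B1" "\<gamma> s1 \<in> B1" for s0 s1
    using stay_gamma[OF d1 d2 nz kp cv r2k _ r1r2, of s0 s1 x] that r1pos
    unfolding B1_def S2_def by auto
  define A0 where "A0 = maxint \<gamma> T B1"
  define A1 where "A1 = maxint \<gamma> T S1"
  define M2 where "M2 = maxint \<gamma> T S2"
  define AB2 where "AB2 = maxint \<gamma> T B2"
  define Rr where "Rr = robust_rel \<gamma> T r1 r2 x"
  have rr_iff: "((a1, b1), (a2, b2)) \<in> Rr \<longleftrightarrow> (a1, b1) \<in> A1 \<and> (a2, b2) \<in> A1 \<and>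
      (\<exists>p q. (p, q) \<in> M2 \<and> {a1..b1} \<union> {a2..b2} \<subseteq> {p..q})" for a1 b1 a2 b2
    unfolding Rr_def robust_rel_def A1_def M2_def S1_def S2_def by auto
  have Rsub: "Rr \<subseteq> A1 \<times> A1" using rr_iff by auto
  have tr_ab: "a \<le> b" if "trace_in \<gamma> T K a b" for K a b using that by (simp add: trace_in_def)
  have equiv: "equiv A1 Rr"
  proof (rule equivI)
    show "Rr \<subseteq> A1 \<times> A1" by (rule Rsub)
    show "refl_on A1 Rr"
      unfolding refl_on_def
    proof
      fix I assume I: "I \<in> A1"
      obtain a b where ab: "I = (a, b)" by fastforce
      have "trace_in \<gamma> T S2 a b" using maxint_trace[of a b \<gamma> T S1] I ab S1S2 trace_mono unfolding A1_def by blast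
      then obtain p q where "(p, q) \<in> M2" "p \<le> a" "b \<le> q"
        using maxint_cover[OF cS2 cont] unfolding M2_def by blast
      then show "(I, I) \<in> Rr" using I ab rr_iff by auto
    qed
    show "sym Rr" unfolding sym_def
    proof (intro allI impI)
      fix I J assume "(I, J) \<in> Rr"
      then show "(J, I) \<in> Rr" using rr_iff[of "fst I" "snd I" "fst J" "snd J"] rr_iff[of "fst J" "snd J" "fst I" "snd I"]
        by (auto simp: Un_commute)
    qed
    show "trans Rr" unfolding trans_def
    proof (intro allI impI)
      fix I J L assume IJ: "(I, J) \<in> Rr" and JL: "(J, L) \<in> Rr"
      obtain a1 b1 where I: "I = (a1, b1)" by fastforce
      obtain a2 b2 where J: "J = (a2, b2)" by fastforce
      obtain a3 b3 where L: "L = (a3, b3)" by fastforce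
      obtain p q where pq: "(p, q) \<in> M2" "{a1..b1} \<union> {a2..b2} \<subseteq> {p..q}" and in1: "(a1, b1) \<in> A1" "(a2, b2) \<in> A1"
        using IJ rr_iff I J by auto
      obtain p' q' where pq': "(p', q') \<in> M2" "{a2..b2} \<union> {a3..b3} \<subseteq> {p'..q'}" and in3: "(a3, b3) \<in> A1"
        using JL rr_iff J L by auto
      have a2b2: "a2 \<le> b2" using maxint_trace[of a2 b2 \<gamma> T S1] in1(2) tr_ab unfolding A1_def by blast
      have "p \<le> p' \<and> q' \<le> q"
        by (rule maxint_overlap[of p q \<gamma> T S2 p' q' a2]) (use pq pq' a2b2 maxint_trace M2_def in auto)
      then have "{a1..b1} \<union> {a3..b3} \<subseteq> {p..q}" using pq pq' by auto
      then show "(I, L) \<in> Rr" using rr_iff I L pq in1 in3 by auto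
    qed
  qed
  have cls_eq: "Rr``{I} = Rr``{J}" if "(I, J) \<in> Rr" for I J
    using equiv_class_eq_iff[OF equiv] that by blast
  have self: "I \<in> Rr``{I}" if "I \<in> A1" for I by (rule equiv_class_self[OF equiv that])
  have part1: "ecard A0 \<le> ecard (A1 // Rr)"
  proof -
    have cover1: "\<exists>J. J \<in> A1 \<and> fst J \<le> fst I \<and> snd I \<le> snd J" if I: "I \<in> A0" for I
    proof -
      obtain a b where ab: "I = (a, b)" by fastforce
      have "trace_in \<gamma> T S1 a b" using maxint_trace[of a b \<gamma> T B1] I ab B1S1 trace_mono unfolding A0_def by blast
      then obtain p q where "(p, q) \<in> maxint \<gamma> T S1" "p \<le> a" "b \<le> q" using maxint_cover[OF cS1 cont] by blast
      then show ?thesis using ab unfolding A1_def by auto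
    qed
    define c where "c I = (SOME J. J \<in> A1 \<and> fst J \<le> fst I \<and> snd I \<le> snd J)" for I
    have cI: "c I \<in> A1 \<and> fst (c I) \<le> fst I \<and> snd I \<le> snd (c I)" if "I \<in> A0" for I
      unfolding c_def by (rule someI_ex[OF cover1[OF that]])
    define f where "f I = Rr``{c I}" for I
    have nogap: False
      if ab: "(a, b) \<in> A0" and ab': "(a', b') \<in> A0" and pq: "(p, q) \<in> M2"
        and sub: "{a..b} \<union> {a'..b'} \<subseteq> {p..q}" and lt: "b < a'" for a b a' b' p q
    proof -
      have t1: "trace_in \<gamma> T B1 a b" using maxint_trace ab unfolding A0_def by blast
      have t2: "trace_in \<gamma> T B1 a' b'" using maxint_trace ab' unfolding A0_def by blast
      have tq: "trace_in \<gamma> T S2 p q" using maxint_trace pq unfolding M2_def by blast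
      have o1: "0 \<le> a" "a \<le> b" "b \<le> T" "\<gamma> ` {a..b} \<subseteq> B1" using t1 by (auto simp: trace_in_def)
      have o2: "0 \<le> a'" "a' \<le> b'" "b' \<le> T" "\<gamma> ` {a'..b'} \<subseteq> B1" using t2 by (auto simp: trace_in_def)
      have oq: "\<gamma> ` {p..q} \<subseteq> S2" using tq by (auto simp: trace_in_def)
      have "{b..a'} \<subseteq> {p..q}" using sub o1 o2 by auto
      then have gS: "\<gamma> ` {b..a'} \<subseteq> S2" using oq by blast
      have gb: "\<gamma> b \<in> B1" using o1 by auto
      have ga: "\<gamma> a' \<in> B1" using o2 by auto
      have mid: "\<gamma> ` {b..a'} \<subseteq> B1" by (rule stay) (use o1 o2 lt gS gb ga in auto)
      have "trace_in \<gamma> T B1 a b'"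
        unfolding trace_in_def
      proof (intro conjI)
        show "0 \<le> a" "a \<le> b'" "b' \<le> T" using o1 o2 lt by auto
        show "\<gamma> ` {a..b'} \<subseteq> B1"
        proof
          fix y assume "y \<in> \<gamma> ` {a..b'}"
          then obtain t where t: "t \<in> {a..b'}" and y: "y = \<gamma> t" by auto
          show "y \<in> B1"
          proof (cases "t \<le> b")
            case True then show ?thesis using t y o1 by auto
          next
            case False
            show ?thesis
            proof (cases "t \<le> a'")
              case True then show ?thesis using False t y mid by auto
            next
              case False2: False
              then show ?thesis using t y o2 by auto
            qed
          qed
        qed
      qed
      moreover have "{a..b} \<subseteq> {a..b'}" using o2 lt by auto
      ultimately have "a = a \<and> b' = b" using maxint_max[of a b \<gamma> T B1 a b'] ab unfolding A0_def by blast
      then show False using lt o2 by simp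
    qed
    have inj: "inj_on f A0"
    proof (rule inj_onI)
      fix I I' assume I: "I \<in> A0" and I': "I' \<in> A0" and eq: "f I = f I'"
      obtain a b where ab: "I = (a, b)" by fastforce
      obtain a' b' where ab': "I' = (a', b')" by fastforce
      obtain u w where uw: "c I = (u, w)" by fastforce
      obtain u' w' where uw': "c I' = (u', w')" by fastforce
      have c1: "c I \<in> A1" "u \<le> a" "b \<le> w" using cI[OF I] ab uw by auto
      have c2: "c I' \<in> A1" "u' \<le> a'" "b' \<le> w'" using cI[OF I'] ab' uw' by auto
      have "c I \<in> Rr``{c I}" using self[OF c1(1)] .
      then have "c I \<in> Rr``{c I'}" using eq unfolding f_def by simp
      then have "(c I', c I) \<in> Rr" by (rule ImageE) simp
      then obtain p q where pq: "(p, q) \<in> M2" "{u'..w'} \<union> {u..w} \<subseteq> {p..q}"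
        using rr_iff uw uw' by auto
      have sub: "{a..b} \<union> {a'..b'} \<subseteq> {p..q}" using pq(2) c1 c2 by auto
      have sub': "{a'..b'} \<union> {a..b} \<subseteq> {p..q}" using sub by auto
      have IA: "(a, b) \<in> A0" "(a', b') \<in> A0" using I I' ab ab' by auto
      have t1: "trace_in \<gamma> T B1 a b" using maxint_trace IA(1) unfolding A0_def by blast
      have t2: "trace_in \<gamma> T B1 a' b'" using maxint_trace IA(2) unfolding A0_def by blast
      have n1: "\<not> b < a'" using nogap[OF IA(1) IA(2) pq(1) sub] by blast
      have n2: "\<not> b' < a" using nogap[OF IA(2) IA(1) pq(1) sub'] by blast
      have le: "a \<le> b" "a' \<le> b'" using t1 t2 by (auto simp: trace_in_def)
      define m where "m = max a a'"
      have m1: "m \<in> {a..b}" "m \<in> {a'..b'}" using n1 n2 le by (auto simp: m_def)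
      have "a \<le> a' \<and> b' \<le> b" by (rule maxint_overlap[OF IA(1)[unfolded A0_def] t2 m1])
      moreover have "a' \<le> a \<and> b \<le> b'" by (rule maxint_overlap[OF IA(2)[unfolded A0_def] t1 m1(2) m1(1)])
      ultimately show "I = I'" using ab ab' by auto
    qed
    have img: "f ` A0 \<subseteq> A1 // Rr"
    proof
      fix C assume "C \<in> f ` A0"
      then obtain I where I: "I \<in> A0" and C: "C = f I" by auto
      show "C \<in> A1 // Rr" unfolding C f_def by (rule quotientI) (use cI[OF I] in auto)
    qed
    show ?thesis by (rule ecard_inj[OF inj img])
  qed
  have part2: "ecard (A1 // Rr) \<le> ecard AB2"
  proof -
    have cover2: "\<exists>H. H \<in> AB2 \<and> (\<exists>I\<in>C. fst H \<le> fst I \<and> snd I \<le> snd H)" if C: "C \<in> A1 // Rr" for C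
    proof -
      obtain I0 where C0: "C = Rr``{I0}" and I0: "I0 \<in> A1" using C by (rule quotientE)
      obtain a b where ab: "I0 = (a, b)" by fastforce
      have "trace_in \<gamma> T B2 a b" using maxint_trace[of a b \<gamma> T S1] I0 ab S1B2 trace_mono unfolding A1_def by blast
      then obtain p q where "(p, q) \<in> maxint \<gamma> T B2" "p \<le> a" "b \<le> q" using maxint_cover[OF cB2 cont] by blast
      moreover have "I0 \<in> C" using self[OF I0] C0 by simp
      ultimately show ?thesis using ab unfolding AB2_def by force
    qed
    define g where "g C = (SOME H. H \<in> AB2 \<and> (\<exists>I\<in>C. fst H \<le> fst I \<and> snd I \<le> snd H))" for C
    have gC: "g C \<in> AB2 \<and> (\<exists>I\<in>C. fst (g C) \<le> fst I \<and> snd I \<le> snd (g C))" if "C \<in> A1 // Rr" for C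
      unfolding g_def by (rule someI_ex[OF cover2[OF that]])
    have inC: "C = Rr``{I} \<and> I \<in> A1" if C: "C \<in> A1 // Rr" and I: "I \<in> C" for C I
    proof -
      obtain I0 where C0: "C = Rr``{I0}" and I0: "I0 \<in> A1" using C by (rule quotientE)
      have "(I0, I) \<in> Rr" using I C0 by simp
      then show ?thesis using cls_eq C0 Rsub by blast
    qed
    have inj: "inj_on g (A1 // Rr)"
    proof (rule inj_onI)
      fix C C' assume C: "C \<in> A1 // Rr" and C': "C' \<in> A1 // Rr" and eq: "g C = g C'"
      obtain h1 h2 where H: "g C = (h1, h2)" by fastforce
      obtain I where I: "I \<in> C" "h1 \<le> fst I" "snd I \<le> h2" using gC[OF C] H by auto
      obtain I' where I': "I' \<in> C'" "h1 \<le> fst I'" "snd I' \<le> h2" using gC[OF C'] H eq by auto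
      have HB: "(h1, h2) \<in> AB2" using gC[OF C] H by simp
      have "trace_in \<gamma> T S2 h1 h2" using maxint_trace[of h1 h2 \<gamma> T B2] HB B2S2 trace_mono unfolding AB2_def by blast
      then obtain p q where pq: "(p, q) \<in> M2" "p \<le> h1" "h2 \<le> q" using maxint_cover[OF cS2 cont] unfolding M2_def by blast
      have e1: "C = Rr``{I}" "I \<in> A1" using inC[OF C I(1)] by auto
      have e2: "C' = Rr``{I'}" "I' \<in> A1" using inC[OF C' I'(1)] by auto
      obtain a b where ab: "I = (a, b)" by fastforce
      obtain a' b' where ab': "I' = (a', b')" by fastforce
      have "{a..b} \<union> {a'..b'} \<subseteq> {p..q}" using I I' pq ab ab' by auto
      then have "(I, I') \<in> Rr" using rr_iff e1(2) e2(2) ab ab' pq(1) by auto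
      then show "C = C'" using e1 e2 cls_eq by simp
    qed
    have img: "g ` (A1 // Rr) \<subseteq> AB2" using gC by auto
    show ?thesis by (rule ecard_inj[OF inj img])
  qed
  have "count_ball \<gamma> T r1 x = ecard A0" by (simp add: count_ball_def A0_def B1_def)
  moreover have "count_robust_square \<gamma> T r1 r2 x = ecard (A1 // Rr)"
    by (simp add: count_robust_square_def A1_def S1_def Rr_def)
  moreover have "count_ball \<gamma> T r2 x = ecard AB2" by (simp add: count_ball_def AB2_def B2_def)
  ultimately show ?thesis using part1 part2 by simp
qed

end
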